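(* Assume Assumptions A and B, with $F$ the supercell of Assumption B. For every bounded $F$-measurable region $\Lambda\subset\mathbb{R}^d$, every perfect configuration $\overline X$, and every admissible configuration $X$ coinciding with $\overline X$ on $\partial_F\Lambda\cup(\mathbb{R}^d\setminus\Lambda)$ (i.e., $X_{\partial_F\Lambda\cup\Lambda^c}=\overline X_{\partial_F\Lambda\cup\Lambda^c}$), $$v(X_\Lambda\mid X)=v(\overline X_\Lambda\mid\overline X).$$
   Context: Setup. Fix $d\ge1$, a non-degenerate real $d\times d$ matrix $B$, the lattice $\mathbb{L}=B\mathbb{Z}^d$, and a set $\mathbb{G}\subset\mathbb{R}^d$ that is the union of finitely many disjoint translates of $\mathbb{L}$. Fix non-empty bounded sets $T_1,\dots,T_k\subset\mathbb{R}^d$ (tiles) and a unit vector $\vec\mu=(\mu_1,\dots,\mu_k)\in\mathbb{R}^k$ with $\mu_1,\dots,\mu_k>0$. An admissible configuration is a map $\omega:\mathbb{G}\to\{0,1,\dots,k\}$ such that $\operatorname{int}(u+T_{\omega(u)})\cap\operatorname{int}(v+T_{\omega(v)})=\emptyset$ for all distinct $u,v\in\mathbb{G}$ with $\omega(u),\omega(v)\neq0$; it is identified with the set $X=\{(v,\omega(v)):v\in\mathbb{G},\ \omega(v)\neq0\}$ and called non-empty if this set is non-empty. For $x=(v,i)\in X$ write $T_x=v+T_i$, $\mu_x=\mu_i$; for $t\in\mathbb{L}$ write $t+x=(t+v,i)$, $t+X=\{t+x:x\in X\}$; for $\Lambda\subset\mathbb{R}^d$ write $X_\Lambda=\{(v,i)\in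 X:v\in\Lambda\}$. $\Omega$ is the set of admissible configurations with the topology of local convergence: $X_n\to X$ iff for every bounded $\Lambda\subset\mathbb{R}^d$, $(X_n)_\Lambda=X_\Lambda$ for all large $n$. A configuration is periodic if it is non-empty and invariant under translation by a full-rank sublattice of $\mathbb{L}$. Volume allocation. Let $S\subset\mathbb{R}^d$ be an $\mathbb{L}$-invariant set with an $\mathbb{L}$-invariant measure $\lambda$. A volume allocation is a family of measurable functions $\phi_x(\cdot\mid X):S\to[0,1]$, one for each non-empty $X\in\Omega$ and $x\in X$, such that (i) $\phi_{t+x}(t+s\mid t+X)=\phi_x(s\mid X)$ for $\lambda$-a.e. $s$, for all $t\in\mathbb{L}$; (ii) whenever $X_n\to X$ in $\Omega$ and $x\in X_n$ for all $n$, $x\in X$, then $\liminf_n\phi_x(\cdot\mid X_n)\ge\phi_x(\cdot\mid X)$ $\lambda$-a.e.; (iii) $\sum_{x\in X}\phi_x(\cdot\mid X)=1$ $\lambda$-a.e. The allocated volume is $v(x\mid X)=\int_S\phi_x(s\mid X)\,\lambda(ds)$, and $v(X'\mid X)=\sum_{x\in X'}v(x\mid X)$ for $X'\subset X$. Assumption A. There exist a volume allocation and $p_*>0$ such that (a) $p_*\,v(x\mid X)\ge\mu_x$ for every non-empty $X\in\Omega$ and $x\in X$; (b) there are only finitely many non-empty $\overline X\in\Omega$, called perfect configurations, with $p_*\,v(x\mid\overline X)=\mu_x$ for all $x\in\overline X$. Supercells. For a full-rank sublattice $\mathbb{K}\subset\mathbb{L}$, a supercell of $\mathbb{K}$ is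 a set $G=A[0,1)^d$ with $A\mathbb{Z}^d$ a full-rank sublattice of $\mathbb{K}$; its grid is $\mathcal{L}^G=A\mathbb{Z}^d$. A supercell of a periodic configuration $X$ is a supercell of $\{t\in\mathbb{L}:t+X=X\}$; a supercell common to several periodic configurations is a supercell of each of them. For $G=A[0,1)^d$ and $n\ge0$ put $G^{(n)}=\bigcup_{m\in\{-n,\dots,n\}^d}(Am+G)$. For a supercell $F$, cells are the sets $t+F$, $t\in\mathcal{L}^F$, and a set is $F$-measurable if it is a union of cells; for an $F$-measurable $\Lambda$, $\partial_F\Lambda$ is the union of the cells contained in $\Lambda$ whose closures intersect the closure of $\mathbb{R}^d\setminus\Lambda$. $F$ is larger than the interaction radius if whenever $\Lambda,\Lambda'$ are $F$-measurable with disjoint closures, $X,X'\in\Omega$, $x\in X_\Lambda$, $y\in X'_{\Lambda'}$, then $\operatorname{int}T_x\cap\operatorname{int}T_y=\emptyset$. For a perfect $\overline X$ and $X\in\Omega$, a cell $K$ is $\overline X$-correct with respect to $X$ if $X_{K^{(1)}}=\overline X_{K^{(1)}}$. Assumption B. There is a supercell $F$ common to all perfect configurations and larger than the interaction radius such that, for every perfect $\overline X$ and every $X\in\Omega$ with respect to which $F$ is $\overline X$-correct, $\phi_x(\cdot\mid X)=\phi_x(\cdot\mid\overline X)$ $\lambda$-a.e. for every $x\in X_F$. *)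

theory Defs
  imports "HOL-Analysis.Analysis"
begin

(* Points of R^d are vectors  real^'n  (d = CARD('n)).  Configurations are sets of pairs (v,i). *)

definition int_vecs :: "(real^'n) set" where
  "int_vecs = {z. \<forall>i. z$i \<in> \<int>}"

definition lattice_of :: "real^'n^'n \<Rightarrow> (real^'n) set" where
  "lattice_of B = (\<lambda>z. B *v z) ` int_vecs"

definition tile_of :: "(nat \<Rightarrow> (real^'n) set) \<Rightarrow> ((real^'n) \<times> nat) \<Rightarrow> (real^'n) set" where
  "tile_of T x = (\<lambda>s. fst x + s) ` T (snd x)"

definition admissible ::
  "(real^'n) set \<Rightarrow> nat \<Rightarrow> (nat \<Rightarrow> (real^'n) set) \<Rightarrow> ((real^'n) \<times> nat) set \<Rightarrow> bool" where
  "admissible G k T X \<longleftrightarrow>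
     (\<forall>x\<in>X. fst x \<in> G \<and> snd x \<in> {1..k}) \<and>
     (\<forall>x\<in>X. \<forall>y\<in>X. fst x = fst y \<longrightarrow> x = y) \<and>
     (\<forall>x\<in>X. \<forall>y\<in>X. fst x \<noteq> fst y \<longrightarrow>
         interior (tile_of T x) \<inter> interior (tile_of T y) = {})"

definition transl_pt :: "real^'n \<Rightarrow> ((real^'n) \<times> nat) \<Rightarrow> ((real^'n) \<times> nat)" where
  "transl_pt t x = (t + fst x, snd x)"

definition transl :: "real^'n \<Rightarrow> ((real^'n) \<times> nat) set \<Rightarrow> ((real^'n) \<times> nat) set" where
  "transl t X = transl_pt t ` X"

definition restr :: "((real^'n) \<times> nat) set \<Rightarrow> (real^'n) set \<Rightarrow> ((real^'n) \<times> nat) set" where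
  "restr X \<Lambda> = {x \<in> X. fst x \<in> \<Lambda>}"

definition loc_conv :: "(nat \<Rightarrow> ((real^'n) \<times> nat) set) \<Rightarrow> ((real^'n) \<times> nat) set \<Rightarrow> bool" where
  "loc_conv Xs X \<longleftrightarrow>
     (\<forall>\<Lambda>. bounded \<Lambda> \<longrightarrow> (\<forall>\<^sub>F n in sequentially. restr (Xs n) \<Lambda> = restr X \<Lambda>))"

(* volume allocation; phi X x s = \<phi>_x(s | X); the measure lam lives on S = space lam *)
definition volume_allocation ::
  "(real^'n) set \<Rightarrow> (((real^'n) \<times> nat) set \<Rightarrow> bool) \<Rightarrow> (real^'n) measure \<Rightarrow>
   (((real^'n) \<times> nat) set \<Rightarrow> ((real^'n) \<times> nat) \<Rightarrow> real^'n \<Rightarrow> real) \<Rightarrow> bool" where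
  "volume_allocation L adm lam phi \<longleftrightarrow>
     (\<forall>X x. adm X \<and> X \<noteq> {} \<and> x \<in> X \<longrightarrow>
        phi X x \<in> borel_measurable lam \<and>
        (\<forall>s\<in>space lam. 0 \<le> phi X x s \<and> phi X x s \<le> 1) \<and>
        (\<forall>t\<in>L. AE s in lam. phi (transl t X) (transl_pt t x) (t + s) = phi X x s)) \<and>
     (\<forall>Xs X x. (\<forall>n. adm (Xs n)) \<and> adm X \<and> loc_conv Xs X \<and> (\<forall>n. x \<in> Xs n) \<and> x \<in> X \<longrightarrow>
        (AE s in lam. liminf (\<lambda>n. ereal (phi (Xs n) x s)) \<ge> ereal (phi X x s))) \<and>
     (\<forall>X. adm X \<and> X \<noteq> {} \<longrightarrow> (AE s in lam. ((\<lambda>x. phi X x s) has_sum 1) X))"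

definition vol ::
  "(real^'n) measure \<Rightarrow> (((real^'n) \<times> nat) set \<Rightarrow> ((real^'n) \<times> nat) \<Rightarrow> real^'n \<Rightarrow> real) \<Rightarrow>
   ((real^'n) \<times> nat) \<Rightarrow> ((real^'n) \<times> nat) set \<Rightarrow> ennreal" where
  "vol lam phi x X = (\<integral>\<^sup>+ s. ennreal (phi X x s) \<partial>lam)"

definition vols ::
  "(real^'n) measure \<Rightarrow> (((real^'n) \<times> nat) set \<Rightarrow> ((real^'n) \<times> nat) \<Rightarrow> real^'n \<Rightarrow> real) \<Rightarrow>
   ((real^'n) \<times> nat) set \<Rightarrow> ((real^'n) \<times> nat) set \<Rightarrow> ennreal" where
  "vols lam phi X' X = (\<Sum>\<^sub>\<infinity>x\<in>X'. vol lam phi x X)"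

definition perfect ::
  "(((real^'n) \<times> nat) set \<Rightarrow> bool) \<Rightarrow> (real^'n) measure \<Rightarrow>
   (((real^'n) \<times> nat) set \<Rightarrow> ((real^'n) \<times> nat) \<Rightarrow> real^'n \<Rightarrow> real) \<Rightarrow> (nat \<Rightarrow> real) \<Rightarrow> real \<Rightarrow>
   ((real^'n) \<times> nat) set \<Rightarrow> bool" where
  "perfect adm lam phi mu p X \<longleftrightarrow> adm X \<and> X \<noteq> {} \<and>
     (\<forall>x\<in>X. ennreal p * vol lam phi x X = ennreal (mu (snd x)))"

definition periods :: "(real^'n) set \<Rightarrow> ((real^'n) \<times> nat) set \<Rightarrow> (real^'n) set" where
  "periods L X = {t \<in> L. transl t X = X}"

definition supercell :: "real^'n^'n \<Rightarrow> (real^'n) set" where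
  "supercell A = (\<lambda>y. A *v y) ` {y. \<forall>i. 0 \<le> y$i \<and> y$i < 1}"

definition cells :: "real^'n^'n \<Rightarrow> (real^'n) set set" where
  "cells A = {(\<lambda>s. t + s) ` supercell A | t. t \<in> lattice_of A}"

definition F_measurable :: "real^'n^'n \<Rightarrow> (real^'n) set \<Rightarrow> bool" where
  "F_measurable A \<Lambda> \<longleftrightarrow> (\<exists>C \<subseteq> cells A. \<Lambda> = \<Union>C)"

definition F_boundary :: "real^'n^'n \<Rightarrow> (real^'n) set \<Rightarrow> (real^'n) set" where
  "F_boundary A \<Lambda> = \<Union>{K \<in> cells A. K \<subseteq> \<Lambda> \<and> closure K \<inter> closure (- \<Lambda>) \<noteq> {}}"

definition nbhd1 :: "real^'n^'n \<Rightarrow> (real^'n) set \<Rightarrow> (real^'n) set" where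
  "nbhd1 A K = (\<Union>m\<in>{m::real^'n. \<forall>i. m$i \<in> {-1, 0, 1}}. (\<lambda>s. A *v m + s) ` K)"

definition larger_than_interaction_radius ::
  "(((real^'n) \<times> nat) set \<Rightarrow> bool) \<Rightarrow> (nat \<Rightarrow> (real^'n) set) \<Rightarrow> real^'n^'n \<Rightarrow> bool" where
  "larger_than_interaction_radius adm T A \<longleftrightarrow>
     (\<forall>\<Lambda> \<Lambda>' X X' x y. F_measurable A \<Lambda> \<and> F_measurable A \<Lambda>' \<and>
        closure \<Lambda> \<inter> closure \<Lambda>' = {} \<and> adm X \<and> adm X' \<and>
        x \<in> restr X \<Lambda> \<and> y \<in> restr X' \<Lambda>' \<longrightarrow>
        interior (tile_of T x) \<inter> interior (tile_of T y) = {})"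

end

theory Submission
  imports Defs
begin


lemma int_vecs_add: "a \<in> int_vecs \<Longrightarrow> b \<in> int_vecs \<Longrightarrow> a + b \<in> int_vecs"
  unfolding int_vecs_def by auto
lemma int_vecs_neg: "a \<in> int_vecs \<Longrightarrow> - a \<in> int_vecs"
  unfolding int_vecs_def by auto

lemma lattice_add: "a \<in> lattice_of M \<Longrightarrow> b \<in> lattice_of M \<Longrightarrow> a + b \<in> lattice_of M"
  unfolding lattice_of_def
  by (auto simp: matrix_vector_right_distrib[symmetric] intro!: imageI int_vecs_add)

lemma lattice_neg: "a \<in> lattice_of M \<Longrightarrow> - a \<in> lattice_of M"
  unfolding lattice_of_def
proof -
  assume "a \<in> (\<lambda>z. M *v z) ` int_vecs"
  then obtain z where z: "z \<in> int_vecs" "a = M *v z" by auto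
  have "M *v (- z) + M *v z = 0" by (simp add: matrix_vector_right_distrib[symmetric])
  then have "M *v (- z) = - (M *v z)" by (simp add: eq_neg_iff_add_eq_0)
  then have "- a = M *v (- z)" using z by simp
  then show "- a \<in> (\<lambda>z. M *v z) ` int_vecs" using z int_vecs_neg by blast
qed

lemma countable_int_vecs: "countable (int_vecs :: (real^'n) set)"
proof -
  have "int_vecs \<subseteq> range (\<lambda>f::'n \<Rightarrow> int. (\<chi> i. of_int (f i)) :: real^'n)"
  proof
    fix z :: "real^'n" assume "z \<in> int_vecs"
    then have "\<forall>i. \<exists>n::int. z$i = of_int n" unfolding int_vecs_def by (auto elim: Ints_cases)
    then obtain f where "\<forall>i. z$i = of_int (f i)" by metis
    then have "z = (\<chi> i. of_int (f i))" by (simp add: vec_eq_iff)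
    then show "z \<in> range (\<lambda>f::'n \<Rightarrow> int. (\<chi> i. of_int (f i)) :: real^'n)" by blast
  qed
  then show ?thesis by (rule countable_subset) simp
qed

lemma countable_lattice: "countable (lattice_of M)"
  unfolding lattice_of_def using countable_int_vecs by (rule countable_image)


lemma inv_apply: "invertible (A::real^'n^'n) \<Longrightarrow> \<exists>y. A *v y = v"
proof -
  assume "invertible A"
  then obtain A' :: "real^'n^'n" where "A ** A' = mat 1" unfolding invertible_def by blast
  then have "A *v (A' *v v) = v" by (simp add: matrix_vector_mul_assoc)
  then show ?thesis by blast
qed

lemma inv_inj: "invertible (A::real^'n^'n) \<Longrightarrow> A *v a = A *v b \<Longrightarrow> a = b"
proof -
  assume a: "invertible A" "A *v a = A *v b"
  have "inj ((*v) A)" using inj_matrix_vector_mult[OF a(1)] .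
  then show "a = b" using a(2) by (rule injD)
qed

lemma cell_cover:
  fixes A :: "real^'n^'n"
  assumes "invertible A"
  shows "\<exists>t\<in>lattice_of A. v \<in> (\<lambda>s. t + s) ` supercell A"
proof -
  obtain y where yv: "A *v y = v" using inv_apply[OF assms] by blast
  define z :: "real^'n" where "z = (\<chi> i. of_int \<lfloor>y$i\<rfloor>)"
  have zi: "z \<in> int_vecs" unfolding int_vecs_def z_def by auto
  have f: "y - z \<in> {y. \<forall>i. 0 \<le> y$i \<and> y$i < 1}"
    unfolding z_def by (auto simp: floor_le_iff) linarith
  have "v = A *v z + A *v (y - z)"
    using yv by (simp add: matrix_vector_right_distrib[symmetric])
  moreover have "A *v z \<in> lattice_of A" using zi unfolding lattice_of_def by (rule imageI)
  moreover have "A *v (y - z) \<in> supercell A" using f unfolding supercell_def by (rule imageI)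
  ultimately show ?thesis by blast
qed

lemma cell_unique:
  fixes A :: "real^'n^'n"
  assumes "invertible A" "t1 \<in> lattice_of A" "t2 \<in> lattice_of A"
    "w \<in> (\<lambda>s. t1 + s) ` supercell A" "w \<in> (\<lambda>s. t2 + s) ` supercell A"
  shows "t1 = t2"
proof -
  obtain z1 z2 where z: "z1 \<in> int_vecs" "z2 \<in> int_vecs" "t1 = A *v z1" "t2 = A *v z2"
    using assms(2,3) unfolding lattice_of_def by auto
  obtain y1 y2 where y: "\<forall>i. 0 \<le> y1$i \<and> y1$i < 1" "\<forall>i. 0 \<le> y2$i \<and> y2$i < 1"
    "w = t1 + A *v y1" "w = t2 + A *v y2"
    using assms(4,5) unfolding supercell_def by auto
  have "A *v (z1 + y1) = A *v (z2 + y2)"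
    using y z by (simp add: matrix_vector_right_distrib)
  then have e: "z1 + y1 = z2 + y2" by (rule inv_inj[OF assms(1)])
  have "z1 = z2"
  unfolding vec_eq_iff proof
    fix i
    have "z1$i \<in> \<int>" "z2$i \<in> \<int>" using z(1,2) unfolding int_vecs_def by auto
    then obtain a b where ab: "z1$i = of_int a" "z2$i = of_int b"
      by (auto elim!: Ints_cases)
    have "(z1 + y1)$i = (z2 + y2)$i" using e by simp
    then have "of_int a + y1$i = of_int b + y2$i" using ab by simp
    then have "\<lfloor>of_int a + y1$i\<rfloor> = \<lfloor>of_int b + y2$i\<rfloor>" by simp
    moreover have "\<lfloor>of_int a + y1$i\<rfloor> = a" using y(1) by (simp add: floor_unique)
    moreover have "\<lfloor>of_int b + y2$i\<rfloor> = b" using y(2) by (simp add: floor_unique)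
    ultimately show "z1$i = z2$i" using ab by simp
  qed
  then show ?thesis using z by simp
qed

lemma corner_closure:
  assumes "\<forall>i. c$i \<in> {0,1}"
  shows "u + A *v c \<in> closure ((\<lambda>s. u + s) ` supercell A)"
proof -
  define r :: "nat \<Rightarrow> real" where "r j = 1 - inverse (real (Suc j))" for j
  have r01: "0 \<le> r j \<and> r j < 1" for j unfolding r_def
    by (auto simp: field_simps)
  have "r \<longlonglongrightarrow> 1 - 0" unfolding r_def
    by (intro tendsto_diff tendsto_const LIMSEQ_inverse_real_of_nat)
  then have rl: "r \<longlonglongrightarrow> 1" by simp
  have mem: "u + A *v (r j *\<^sub>R c) \<in> (\<lambda>s. u + s) ` supercell A" for j
  proof -
    have "\<forall>i. 0 \<le> (r j *\<^sub>R c)$i \<and> (r j *\<^sub>R c)$i < 1"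
    proof
      fix i
      have "c$i = 0 \<or> c$i = 1" using assms by auto
      then show "0 \<le> (r j *\<^sub>R c)$i \<and> (r j *\<^sub>R c)$i < 1" using r01[of j] by auto
    qed
    then show ?thesis unfolding supercell_def by blast
  qed
  have "(\<lambda>j. u + r j *\<^sub>R (A *v c)) \<longlonglongrightarrow> u + 1 *\<^sub>R (A *v c)"
    by (intro tendsto_intros rl)
  moreover have "\<And>j. u + A *v (r j *\<^sub>R c) = u + r j *\<^sub>R (A *v c)"
    by (simp only: matrix_vector_mult_scaleR)
  ultimately have lim: "(\<lambda>j. u + A *v (r j *\<^sub>R c)) \<longlonglongrightarrow> u + A *v c"
    by simp
  have "\<exists>f. (\<forall>n. f n \<in> (\<lambda>s. u + s) ` supercell A) \<and> f \<longlonglongrightarrow> u + A *v c"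
    using mem lim by (intro exI[of _ "\<lambda>j. u + A *v (r j *\<^sub>R c)"]) simp
  then show ?thesis by (simp only: closure_sequential)
qed


lemma Am_lattice: "\<forall>i. m$i \<in> {-1, 0, 1::real} \<Longrightarrow> A *v m \<in> lattice_of A"
  unfolding lattice_of_def int_vecs_def
proof (rule imageI, safe)
  fix i assume "\<forall>i. m$i \<in> {-1, 0, 1::real}"
  then have "m$i = -1 \<or> m$i = 0 \<or> m$i = 1" by auto
  then show "m$i \<in> \<int>" by (metis Ints_1 Ints_0 Ints_minus)
qed

lemma nbhd_in_region:
  fixes A :: "real^'n^'n"
  assumes A: "invertible A" and FM: "F_measurable A \<Lambda>" and t: "t \<in> lattice_of A"
    and v: "v \<in> (\<lambda>s. t + s) ` supercell A" "v \<notin> \<Lambda>"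
  shows "(\<lambda>s. t + s) ` nbhd1 A (supercell A) \<subseteq> F_boundary A \<Lambda> \<union> - \<Lambda>"
proof
  obtain C where C: "C \<subseteq> cells A" "\<Lambda> = \<Union>C" using FM unfolding F_measurable_def by auto
  define K where "K = (\<lambda>s. t + s) ` supercell A"
  have KL: "K \<subseteq> - \<Lambda>"
  proof
    fix u assume u: "u \<in> K"
    show "u \<in> - \<Lambda>"
    proof
      assume "u \<in> \<Lambda>"
      then obtain c where c: "c \<in> C" "u \<in> c" using C by auto
      then obtain t' where t': "t' \<in> lattice_of A" "c = (\<lambda>s. t' + s) ` supercell A"
        using C unfolding cells_def by auto
      have "t = t'" using cell_unique[OF A t t'(1)] u c t' K_def by blast
      then have "v \<in> \<Lambda>" using v c t' C by auto
      then show False using v by simp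
    qed
  qed
  fix w assume "w \<in> (\<lambda>s. t + s) ` nbhd1 A (supercell A)"
  then obtain m f where mf: "\<forall>i. m$i \<in> {-1, 0, 1::real}" "f \<in> supercell A" "w = t + (A *v m + f)"
    unfolding nbhd1_def by auto
  show "w \<in> F_boundary A \<Lambda> \<union> - \<Lambda>"
  proof (cases "w \<in> \<Lambda>")
    case False then show ?thesis by simp
  next
    case True
    then obtain c where c: "c \<in> C" "w \<in> c" using C by auto
    then obtain t' where t': "t' \<in> lattice_of A" "c = (\<lambda>s. t' + s) ` supercell A"
      using C unfolding cells_def by auto
    have tm: "t + A *v m \<in> lattice_of A" using lattice_add[OF t Am_lattice[OF mf(1)]] .
    have "w \<in> (\<lambda>s. (t + A *v m) + s) ` supercell A" using mf by (simp add: add.assoc)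
    then have "t + A *v m = t'" using cell_unique[OF A tm t'(1)] c t' by blast
    then have K'c: "(\<lambda>s. (t + A *v m) + s) ` supercell A = c" using t' by simp
    define c0 :: "real^'n" where "c0 = (\<chi> i. if m$i = 1 then 1 else 0)"
    have c0: "\<forall>i. c0$i \<in> {0,1}" unfolding c0_def by auto
    have c0m: "\<forall>i. (c0 - m)$i \<in> {0,1}" using mf(1) unfolding c0_def by auto
    have q1: "t + A *v c0 \<in> closure K" unfolding K_def by (rule corner_closure[OF c0])
    have "(t + A *v m) + A *v (c0 - m) \<in> closure c"
      using corner_closure[OF c0m, of "t + A *v m" A] K'c by simp
    moreover have "A *v m + A *v (c0 - m) = A *v c0"
      by (simp only: matrix_vector_right_distrib[symmetric]) simp
    ultimately have q2: "t + A *v c0 \<in> closure c"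
      by (simp only: add.assoc)
    have "closure K \<subseteq> closure (- \<Lambda>)" using KL by (rule closure_mono)
    then have "closure c \<inter> closure (- \<Lambda>) \<noteq> {}" using q1 q2 by blast
    moreover have "c \<in> cells A" "c \<subseteq> \<Lambda>" using c C by auto
    ultimately show ?thesis using c(2) unfolding F_boundary_def by blast
  qed
qed


lemma transl_transl: "transl a (transl b Y) = transl (a + b) Y"
  unfolding transl_def transl_pt_def by (auto simp: image_image add.assoc)

lemma transl_0: "transl 0 Y = Y"
  unfolding transl_def transl_pt_def by auto

lemma restr_transl: "restr (transl u Y) N = transl u (restr Y {v. u + v \<in> N})"
  unfolding restr_def transl_def transl_pt_def by auto

lemma restr_sub: "restr X D = restr Y D \<Longrightarrow> E \<subseteq> D \<Longrightarrow> restr X E = restr Y E"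
  unfolding restr_def by (auto simp: set_eq_iff)

lemma tile_transl: "tile_of T (transl_pt t x) = (\<lambda>s. t + s) ` tile_of T x"
  unfolding tile_of_def transl_pt_def by (auto simp: image_image add.assoc)

lemma admissible_transl:
  assumes "admissible G k T X" "\<forall>g\<in>G. t + g \<in> G"
  shows "admissible G k T (transl t X)"
proof -
  have tt: "tile_of T (t + a, b) = (\<lambda>s. t + s) ` tile_of T (a, b)" for a b
    using tile_transl[of T t "(a,b)"] by (simp add: transl_pt_def)
  show ?thesis
  using assms unfolding admissible_def transl_def
  by (auto simp: tt interior_translation transl_pt_def image_Int[symmetric] inj_on_def)
qed


lemma AE_shift:
  fixes lam :: "(real^'n) measure"
  assumes sp: "\<And>u. u \<in> space lam \<Longrightarrow> -t + u \<in> space lam"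
    and inv: "\<forall>E\<in>sets lam. (\<lambda>s. t + s) ` E \<in> sets lam \<and>
                     emeasure lam ((\<lambda>s. t + s) ` E) = emeasure lam E"
    and ae: "AE s in lam. P (t + s)"
  shows "AE u in lam. P u"
proof -
  obtain N where N: "{s \<in> space lam. \<not> P (t + s)} \<subseteq> N" "N \<in> sets lam" "emeasure lam N = 0"
    using ae by (auto elim!: AE_E)
  have "(\<lambda>s. t + s) ` N \<in> null_sets lam" using inv N by auto
  moreover have "{u \<in> space lam. \<not> P u} \<subseteq> (\<lambda>s. t + s) ` N"
  proof
    fix u assume u: "u \<in> {u \<in> space lam. \<not> P u}"
    have "\<not> P (t + (-t + u))" using u by simp
    then have "-t + u \<in> N" using N(1) sp[of u] u by auto
    moreover have "u = t + (-t + u)" by simp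
    ultimately show "u \<in> (\<lambda>s. t + s) ` N" by blast
  qed
  ultimately show ?thesis by (rule AE_I')
qed

lemma infsum_nat_ennreal: "infsum (g :: nat \<Rightarrow> ennreal) UNIV = suminf g"
proof -
  have "(g has_sum infsum g UNIV) UNIV" by (rule has_sum_infsum) (simp add: nonneg_summable_on_complete)
  then have "g sums infsum g UNIV" by (rule has_sum_imp_sums)
  then show ?thesis by (simp add: sums_iff)
qed

lemma nn_integral_infsum:
  fixes f :: "'a \<Rightarrow> 'b \<Rightarrow> ennreal"
  assumes A: "countable A" and meas: "\<And>x. x \<in> A \<Longrightarrow> f x \<in> borel_measurable M"
  shows "(\<integral>\<^sup>+ s. (\<Sum>\<^sub>\<infinity>x\<in>A. f x s) \<partial>M) = (\<Sum>\<^sub>\<infinity>x\<in>A. \<integral>\<^sup>+ s. f x s \<partial>M)"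
proof (cases "finite A")
  case True
  then show ?thesis using meas by (simp add: nn_integral_sum)
next
  case False
  define e where "e = from_nat_into A"
  have bij: "bij_betw e UNIV A" unfolding e_def using bij_betw_from_nat_into[OF A False] .
  have "\<And>s. (\<Sum>\<^sub>\<infinity>x\<in>A. f x s) = (\<Sum>n. f (e n) s)"
    using infsum_reindex_bij_betw[OF bij, of "\<lambda>x. f x s" for s] infsum_nat_ennreal by metis
  moreover have "(\<Sum>\<^sub>\<infinity>x\<in>A. \<integral>\<^sup>+ s. f x s \<partial>M) = (\<Sum>n. \<integral>\<^sup>+ s. f (e n) s \<partial>M)"
    using infsum_reindex_bij_betw[OF bij, of "\<lambda>x. \<integral>\<^sup>+ s. f x s \<partial>M"] infsum_nat_ennreal by metis
  moreover have "(\<integral>\<^sup>+ s. (\<Sum>n. f (e n) s) \<partial>M) = (\<Sum>n. \<integral>\<^sup>+ s. f (e n) s \<partial>M)"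
    by (rule nn_integral_suminf) (use meas bij bij_betwE in blast)
  ultimately show ?thesis by simp
qed

lemma infsum_ennreal_real:
  fixes f :: "'a \<Rightarrow> real"
  assumes "f summable_on A" "\<And>x. x \<in> A \<Longrightarrow> f x \<ge> 0"
  shows "(\<Sum>\<^sub>\<infinity>x\<in>A. ennreal (f x)) = ennreal (infsum f A)"
proof -
  have "\<And>F. \<lbrakk>finite F; F \<subseteq> A\<rbrakk> \<Longrightarrow> sum (ennreal \<circ> f) F = ennreal (sum f F)"
    by (metis (mono_tags, lifting) comp_def assms(2) subsetD sum.cong sum_ennreal)
  then have "infsum (ennreal \<circ> f) A = ennreal (infsum f A)"
    by (simp add: infsum_comm_additive_general assms(1))
  then show ?thesis by (simp add: o_def)
qed


lemma sum_split_eq: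
  fixes a b :: "((real^'n) \<times> nat) \<Rightarrow> real"
  assumes ha: "(a has_sum 1) X" and hb: "(b has_sum 1) Y"
    and eqs: "restr X (- \<Lambda>) = restr Y (- \<Lambda>)" and eqf: "\<forall>x\<in>restr X (- \<Lambda>). a x = b x"
  shows "infsum a (restr X \<Lambda>) = infsum b (restr Y \<Lambda>)"
proof -
  have dX: "X = restr X \<Lambda> \<union> restr X (- \<Lambda>)" "restr X \<Lambda> \<inter> restr X (- \<Lambda>) = {}"
    unfolding restr_def by auto
  have dY: "Y = restr Y \<Lambda> \<union> restr Y (- \<Lambda>)" "restr Y \<Lambda> \<inter> restr Y (- \<Lambda>) = {}"
    unfolding restr_def by auto
  have sa: "a summable_on X" using ha summable_on_def by blast
  have sb: "b summable_on Y" using hb summable_on_def by blast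
  have sa1: "a summable_on restr X \<Lambda>" "a summable_on restr X (- \<Lambda>)"
    using summable_on_subset_banach[OF sa] unfolding restr_def by auto
  have sb1: "b summable_on restr Y \<Lambda>" "b summable_on restr Y (- \<Lambda>)"
    using summable_on_subset_banach[OF sb] unfolding restr_def by auto
  have "1 = infsum a X" using ha by (simp add: infsumI)
  also have "\<dots> = infsum a (restr X \<Lambda>) + infsum a (restr X (- \<Lambda>))"
    using infsum_Un_disjoint[OF sa1 dX(2)] dX(1) by simp
  finally have e1: "1 = infsum a (restr X \<Lambda>) + infsum a (restr X (- \<Lambda>))" .
  have "1 = infsum b Y" using hb by (simp add: infsumI)
  also have "\<dots> = infsum b (restr Y \<Lambda>) + infsum b (restr Y (- \<Lambda>))"
    using infsum_Un_disjoint[OF sb1 dY(2)] dY(1) by simp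
  finally have e2: "1 = infsum b (restr Y \<Lambda>) + infsum b (restr Y (- \<Lambda>))" .
  have "infsum a (restr X (- \<Lambda>)) = infsum b (restr Y (- \<Lambda>))"
    using infsum_cong[of "restr X (- \<Lambda>)" a b] eqf eqs by simp
  then show ?thesis using e1 e2 by simp
qed

theorem lemma5:
  fixes B :: "real^'n^'n" and L G :: "(real^'n) set" and offs :: "(real^'n) set"
    and k :: nat and T :: "nat \<Rightarrow> (real^'n) set" and mu :: "nat \<Rightarrow> real"
    and S :: "(real^'n) set" and lam :: "(real^'n) measure"
    and phi :: "((real^'n) \<times> nat) set \<Rightarrow> ((real^'n) \<times> nat) \<Rightarrow> real^'n \<Rightarrow> real"
    and p :: real and A :: "real^'n^'n"
    and \<Lambda> :: "(real^'n) set" and Xb X :: "((real^'n) \<times> nat) set"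
  assumes B: "invertible B" and L: "L = lattice_of B"
    and offs: "finite offs"
      "\<forall>a\<in>offs. \<forall>b\<in>offs. a \<noteq> b \<longrightarrow> ((\<lambda>s. a + s) ` L) \<inter> ((\<lambda>s. b + s) ` L) = {}"
    and G: "G = (\<Union>a\<in>offs. (\<lambda>s. a + s) ` L)"
    and tiles: "\<forall>i\<in>{1..k}. bounded (T i) \<and> T i \<noteq> {}"
    and mu_pos: "\<forall>i\<in>{1..k}. mu i > 0" and mu_unit: "(\<Sum>i=1..k. (mu i)\<^sup>2) = 1"
    and S: "space lam = S" "\<forall>t\<in>L. (\<lambda>s. t + s) ` S = S"
    and lam_inv: "\<forall>t\<in>L. \<forall>E\<in>sets lam. (\<lambda>s. t + s) ` E \<in> sets lam \<and>
                     emeasure lam ((\<lambda>s. t + s) ` E) = emeasure lam E"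
    and alloc: "volume_allocation L (admissible G k T) lam phi"
    (* Assumption A *)
    and p_pos: "p > 0"
    and A_a: "\<forall>Y. admissible G k T Y \<and> Y \<noteq> {} \<longrightarrow>
                 (\<forall>x\<in>Y. ennreal p * vol lam phi x Y \<ge> ennreal (mu (snd x)))"
    and A_b: "finite {Y. perfect (admissible G k T) lam phi mu p Y}"
    (* Assumption B *)
    and F_cell: "invertible A"
    and F_common: "\<forall>Y. perfect (admissible G k T) lam phi mu p Y \<longrightarrow>
                     lattice_of A \<subseteq> periods L Y"
    and F_radius: "larger_than_interaction_radius (admissible G k T) T A"
    and F_local: "\<forall>Y Z. perfect (admissible G k T) lam phi mu p Y \<and> admissible G k T Z \<and>
                     restr Z (nbhd1 A (supercell A)) = restr Y (nbhd1 A (supercell A)) \<longrightarrow>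
                     (\<forall>x\<in>restr Z (supercell A). AE s in lam. phi Z x s = phi Y x s)"
    (* the data of the lemma *)
    and Lam: "bounded \<Lambda>" "F_measurable A \<Lambda>"
    and Xb: "perfect (admissible G k T) lam phi mu p Xb"
    and X: "admissible G k T X"
    and agree: "restr X (F_boundary A \<Lambda> \<union> - \<Lambda>) = restr Xb (F_boundary A \<Lambda> \<union> - \<Lambda>)"
  shows "vols lam phi (restr X \<Lambda>) X = vols lam phi (restr Xb \<Lambda>) Xb"
proof -
  note adm_Xb = conjunct1[OF Xb[unfolded perfect_def]]
  have Xb_ne: "Xb \<noteq> {}" using Xb unfolding perfect_def by auto
  have LA: "\<And>t. t \<in> lattice_of A \<Longrightarrow> t \<in> L \<and> transl t Xb = Xb"
    using F_common Xb unfolding periods_def by blast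
  have Lneg: "\<And>t. t \<in> L \<Longrightarrow> - t \<in> L" using L lattice_neg by blast
  have Ladd: "\<And>a b. a \<in> L \<Longrightarrow> b \<in> L \<Longrightarrow> a + b \<in> L" using L lattice_add by blast
  have Ginv: "\<And>t. t \<in> L \<Longrightarrow> \<forall>g\<in>G. t + g \<in> G"
  proof
    fix t g assume t: "t \<in> L" and "g \<in> G"
    then obtain a s where "a \<in> offs" "s \<in> L" "g = a + s" using G by auto
    then have "t + g = a + (t + s)" by (simp add: algebra_simps)
    then show "t + g \<in> G" using G \<open>a \<in> offs\<close> Ladd[OF t \<open>s \<in> L\<close>] by blast
  qed
  have spinv: "\<And>t u. t \<in> L \<Longrightarrow> u \<in> space lam \<Longrightarrow> -t + u \<in> space lam"
    using S Lneg by blast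
  have invL: "\<And>t. t \<in> L \<Longrightarrow> \<forall>E\<in>sets lam. (\<lambda>s. t + s) ` E \<in> sets lam \<and>
                     emeasure lam ((\<lambda>s. t + s) ` E) = emeasure lam E"
    using lam_inv by blast
  note a1 = conjunct1[OF alloc[unfolded volume_allocation_def], rule_format]
  have alloc_tr: "AE s in lam. phi (transl t Y) (transl_pt t y) (t + s) = phi Y y s"
    if "admissible G k T Y" "Y \<noteq> {}" "y \<in> Y" "t \<in> L" for Y y t
  proof -
    have "\<forall>t\<in>L. AE s in lam. phi (transl t Y) (transl_pt t y) (t + s) = phi Y y s"
      using a1[of Y y] that by blast
    then show ?thesis using that(4) by blast
  qed
  have alloc_meas: "\<And>Y y. admissible G k T Y \<Longrightarrow> Y \<noteq> {} \<Longrightarrow> y \<in> Y \<Longrightarrow>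
      phi Y y \<in> borel_measurable lam \<and> (\<forall>s\<in>space lam. 0 \<le> phi Y y s \<and> phi Y y s \<le> 1)"
    using a1 by blast
  have alloc_sum: "\<And>Y. admissible G k T Y \<Longrightarrow> Y \<noteq> {} \<Longrightarrow>
      AE s in lam. ((\<lambda>x. phi Y x s) has_sum 1) Y"
    using conjunct2[OF conjunct2[OF alloc[unfolded volume_allocation_def]]] by blast
  have agree2: "restr X (- \<Lambda>) = restr Xb (- \<Lambda>)"
    using restr_sub[OF agree] by blast
  have "restr Xb (- \<Lambda>) \<noteq> {}"
  proof -
    obtain y where y: "y \<in> Xb" using Xb_ne by blast
    obtain r where r: "\<forall>v\<in>\<Lambda>. norm v \<le> r" using Lam(1) bounded_iff by blast
    define one :: "real^'n" where "one = (\<chi> i. 1)"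
    define w where "w = A *v one"
    have "w \<noteq> 0"
    proof
      assume "w = 0"
      then have "A *v one = A *v 0" unfolding w_def by simp
      then have "one = 0" using inv_inj[OF F_cell] by blast
      then show False unfolding one_def by (simp add: vec_eq_iff)
    qed
    then have nw: "norm w > 0" by simp
    obtain j :: nat where j: "real j > (r + norm (fst y)) / norm w" using reals_Archimedean2 by blast
    then have j2: "real j * norm w > r + norm (fst y)" using nw by (simp add: field_simps)
    define t where "t = A *v (real j *\<^sub>R one)"
    have "real j *\<^sub>R one \<in> int_vecs" unfolding int_vecs_def one_def by auto
    then have tA: "t \<in> lattice_of A" unfolding t_def lattice_of_def by blast
    have tw: "t = real j *\<^sub>R w" unfolding t_def w_def by (simp add: matrix_vector_mult_scaleR)
    have "transl_pt t y \<in> transl t Xb" using y unfolding transl_def by blast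
    then have ty: "(t + fst y, snd y) \<in> Xb" using LA[OF tA] unfolding transl_pt_def by simp
    have "norm (t + fst y) \<ge> norm t - norm (fst y)" using norm_triangle_ineq2[of t "- fst y"] 
      by (metis diff_minus_eq_add norm_minus_cancel)
    moreover have "norm t = real j * norm w" using tw by simp
    ultimately have "norm (t + fst y) > r" using j2 by linarith
    then have "t + fst y \<notin> \<Lambda>" using r by force
    then show ?thesis using ty unfolding restr_def by force
  qed
  then have X_ne: "X \<noteq> {}" using agree2 unfolding restr_def by auto
  have cG: "countable G" unfolding G using offs(1) L countable_lattice
    by (intro countable_UN) (auto intro: countable_finite)
  have cX: "countable X"
    by (rule countable_subset[of _ "G \<times> UNIV"]) (use X cG in \<open>auto simp: admissible_def\<close>)
  have cXb: "countable Xb"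
    by (rule countable_subset[of _ "G \<times> UNIV"]) (use adm_Xb cG in \<open>auto simp: admissible_def\<close>)
  have loc: "\<forall>x\<in>restr X (- \<Lambda>). AE s in lam. phi X x s = phi Xb x s"
  proof
    fix x assume xr: "x \<in> restr X (- \<Lambda>)"
    then have xX: "x \<in> X" and xL: "fst x \<notin> \<Lambda>" unfolding restr_def by auto
    obtain t where tA: "t \<in> lattice_of A" and xt: "fst x \<in> (\<lambda>s. t + s) ` supercell A"
      using cell_cover[OF F_cell] by blast
    define N where "N = nbhd1 A (supercell A)"
    have sub: "(\<lambda>s. t + s) ` N \<subseteq> F_boundary A \<Lambda> \<union> - \<Lambda>"
      unfolding N_def by (rule nbhd_in_region[OF F_cell Lam(2) tA xt xL])
    have tL: "t \<in> L" using LA[OF tA] by blast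
    have mtA: "- t \<in> lattice_of A" using lattice_neg[OF tA] .
    have mtL: "- t \<in> L" using Lneg[OF tL] .
    define X' where "X' = transl (- t) X"
    define x' where "x' = transl_pt (- t) x"
    have admX': "admissible G k T X'" unfolding X'_def
      by (rule admissible_transl[OF X Ginv[OF mtL]])
    have sub2: "{v. - t + v \<in> N} \<subseteq> F_boundary A \<Lambda> \<union> - \<Lambda>"
    proof
      fix v assume "v \<in> {v. - t + v \<in> N}"
      then have "t + (- t + v) \<in> (\<lambda>s. t + s) ` N" by blast
      then show "v \<in> F_boundary A \<Lambda> \<union> - \<Lambda>" using sub by auto
    qed
    have rN: "restr X' N = restr Xb N"
    proof -
      have "restr X' N = transl (- t) (restr X {v. - t + v \<in> N})"
        unfolding X'_def by (rule restr_transl)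
      also have "\<dots> = transl (- t) (restr Xb {v. - t + v \<in> N})"
        using restr_sub[OF agree sub2] by simp
      also have "\<dots> = restr (transl (- t) Xb) N" by (rule restr_transl[symmetric])
      also have "\<dots> = restr Xb N" using LA[OF mtA] by simp
      finally show ?thesis .
    qed
    have x'X': "x' \<in> X'" unfolding X'_def x'_def transl_def using xX by blast
    have fx': "fst x' \<in> supercell A" using xt unfolding x'_def transl_pt_def by auto
    have FN: "supercell A \<subseteq> N" unfolding N_def nbhd1_def
    proof
      fix f assume "f \<in> supercell A"
      moreover have "(0::real^'n) \<in> {m::real^'n. \<forall>i. m$i \<in> {-1, 0, 1}}" by simp
      moreover have "f = A *v 0 + f" by simp
      ultimately show "f \<in> (\<Union>m\<in>{m::real^'n. \<forall>i. m$i \<in> {-1, 0, 1}}. (\<lambda>s. A *v m + s) ` supercell A)"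
        by (metis (no_types, lifting) UN_iff image_eqI)
    qed
    have x'r: "x' \<in> restr X' (supercell A)" using x'X' fx' unfolding restr_def by auto
    have ae1: "AE s in lam. phi X' x' s = phi Xb x' s"
      using F_local Xb admX' rN x'r unfolding N_def by blast
    have x'Xb: "x' \<in> Xb" using rN x'X' fx' FN unfolding restr_def by blast
    have e1: "transl t X' = X" unfolding X'_def by (simp add: transl_transl transl_0)
    have e2: "transl_pt t x' = x" unfolding x'_def transl_pt_def by simp
    have ae2: "AE s in lam. phi X x (t + s) = phi X' x' s"
      using alloc_tr[OF admX' _ x'X' tL] x'X' e1 e2 by auto
    have ae3: "AE s in lam. phi Xb x (t + s) = phi Xb x' s"
      using alloc_tr[OF adm_Xb Xb_ne x'Xb tL] LA[OF tA] e2 by auto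
    have "AE s in lam. phi X x (t + s) = phi Xb x (t + s)"
      using ae1 ae2 ae3 by eventually_elim simp
    then show "AE s in lam. phi X x s = phi Xb x s"
      using AE_shift[OF spinv[OF tL] invL[OF tL], of "\<lambda>u. phi X x u = phi Xb x u"] by simp
  qed
  have loc2: "AE s in lam. \<forall>x\<in>restr X (- \<Lambda>). phi X x s = phi Xb x s"
    using loc cX by (subst AE_ball_countable) (auto intro: countable_subset[of _ X] simp: restr_def)
  have pw: "AE s in lam. (\<Sum>\<^sub>\<infinity>x\<in>restr X \<Lambda>. ennreal (phi X x s))
                        = (\<Sum>\<^sub>\<infinity>x\<in>restr Xb \<Lambda>. ennreal (phi Xb x s))"
    using loc2 alloc_sum[OF X X_ne] alloc_sum[OF adm_Xb Xb_ne] AE_space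
  proof eventually_elim
    case (elim s)
    have ha: "((\<lambda>x. phi X x s) has_sum 1) X" and hb: "((\<lambda>x. phi Xb x s) has_sum 1) Xb"
      using elim by auto
    have sa: "(\<lambda>x. phi X x s) summable_on restr X \<Lambda>"
      using summable_on_subset_banach ha summable_on_def unfolding restr_def
      by (metis (no_types, lifting) mem_Collect_eq subsetI)
    have sb: "(\<lambda>x. phi Xb x s) summable_on restr Xb \<Lambda>"
      using summable_on_subset_banach hb summable_on_def unfolding restr_def
      by (metis (no_types, lifting) mem_Collect_eq subsetI)
    have na: "\<And>x. x \<in> restr X \<Lambda> \<Longrightarrow> phi X x s \<ge> 0"
      using alloc_meas[OF X X_ne] elim unfolding restr_def by auto
    have nb: "\<And>x. x \<in> restr Xb \<Lambda> \<Longrightarrow> phi Xb x s \<ge> 0"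
      using alloc_meas[OF adm_Xb Xb_ne] elim unfolding restr_def by auto
    have "infsum (\<lambda>x. phi X x s) (restr X \<Lambda>) = infsum (\<lambda>x. phi Xb x s) (restr Xb \<Lambda>)"
      by (rule sum_split_eq[OF ha hb agree2]) (use elim in auto)
    then show ?case using infsum_ennreal_real[OF sa na] infsum_ennreal_real[OF sb nb] by simp
  qed
  have cXL: "countable (restr X \<Lambda>)" using cX by (rule countable_subset[rotated]) (auto simp: restr_def)
  have cXbL: "countable (restr Xb \<Lambda>)" using cXb by (rule countable_subset[rotated]) (auto simp: restr_def)
  have "vols lam phi (restr X \<Lambda>) X = (\<integral>\<^sup>+ s. (\<Sum>\<^sub>\<infinity>x\<in>restr X \<Lambda>. ennreal (phi X x s)) \<partial>lam)"
    unfolding vols_def vol_def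
    by (rule nn_integral_infsum[symmetric, OF cXL]) (use alloc_meas[OF X X_ne] in \<open>auto simp: restr_def\<close>)
  also have "\<dots> = (\<integral>\<^sup>+ s. (\<Sum>\<^sub>\<infinity>x\<in>restr Xb \<Lambda>. ennreal (phi Xb x s)) \<partial>lam)"
    by (rule nn_integral_cong_AE[OF pw])
  also have "\<dots> = vols lam phi (restr Xb \<Lambda>) Xb"
    unfolding vols_def vol_def
    by (rule nn_integral_infsum[OF cXbL]) (use alloc_meas[OF adm_Xb Xb_ne] in \<open>auto simp: restr_def\<close>)
  finally show ?thesis .
qed

end
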